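(* Let $a<b$ and let $\mathbf{v}:[a,b]\to\mathbb{R}^n$ be continuously differentiable, and suppose $\mathbf{v}(t)=0$ for only finitely many $t\in[a,b]$. Then there exists a continuously differentiable function $\mu:[a,b]\to\mathbb{R}$ such that $|\mu(t)|=\|\mathbf{v}(t)\|_2$ for all $t\in[a,b]$.
   Context: $\|\cdot\|_2$ is the Euclidean norm on $\mathbb{R}^n$. *)

theory Defs
  imports "HOL-Analysis.Analysis"
begin

definition C1_on :: "real set \<Rightarrow> (real \<Rightarrow> 'a::real_normed_vector) \<Rightarrow> bool" where
  "C1_on S f \<longleftrightarrow> (\<exists>f'. (\<forall>t\<in>S. (f has_vector_derivative f' t) (at t within S))
                        \<and> continuous_on S f')"

end

theory Submission
  imports Defs
begin

lemma vdiff_quot: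
  fixes f :: "real \<Rightarrow> 'a::real_normed_vector"
  assumes "(f has_vector_derivative f') (at x within S)"
  shows "((\<lambda>y. inverse (y - x) *\<^sub>R (f y - f x)) \<longlongrightarrow> f') (at x within S)"
proof -
  from assms have "((\<lambda>y. (1 / norm(y - x)) *\<^sub>R (f y - (f x + (y-x) *\<^sub>R f'))) \<longlongrightarrow> 0) (at x within S)"
    unfolding has_vector_derivative_def has_derivative_within by simp
  then have 1: "((\<lambda>y. norm ((1 / norm(y - x)) *\<^sub>R (f y - (f x + (y-x) *\<^sub>R f')))) \<longlongrightarrow> 0) (at x within S)"
    by (rule tendsto_norm_zero)
  have 2: "eventually (\<lambda>y. norm ((1 / norm(y - x)) *\<^sub>R (f y - (f x + (y-x) *\<^sub>R f'))) = norm (inverse (y - x) *\<^sub>R (f y - f x) - f')) (at x within S)"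
  proof -
    have "norm ((1 / norm(y - x)) *\<^sub>R (f y - (f x + (y-x) *\<^sub>R f'))) = norm (inverse (y - x) *\<^sub>R (f y - f x) - f')" if "y \<noteq> x" for y
    proof -
      have "inverse (y - x) *\<^sub>R (f y - f x) - f' = inverse (y - x) *\<^sub>R (f y - (f x + (y-x) *\<^sub>R f'))"
      proof -
        have e: "inverse (y - x) *\<^sub>R ((y-x) *\<^sub>R f') = f'" using that by simp
        show ?thesis by (simp only: diff_diff_eq[symmetric] scaleR_diff_right e)
      qed
      then show ?thesis by (simp add: divide_inverse)
    qed
    then show ?thesis by (auto simp: eventually_at intro: exI[of _ 1])
  qed
  have "((\<lambda>y. norm (inverse (y - x) *\<^sub>R (f y - f x) - f')) \<longlongrightarrow> 0) (at x within S)"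
    using Lim_transform_eventually[OF 1 2] .
  then show ?thesis
    by (simp add: tendsto_norm_zero_iff Lim_null[where l=f'])
qed

lemma qlim:
  fixes w u :: "real \<Rightarrow> 'a::real_inner"
  assumes "(w \<longlongrightarrow> L) F" "(u \<longlongrightarrow> L) F"
  shows "((\<lambda>t. inner (w t) (u t) / norm (w t)) \<longlongrightarrow> norm L) F"
proof (cases "L = 0")
  case True
  have "eventually (\<lambda>t. norm (inner (w t) (u t) / norm (w t)) \<le> norm (u t)) F"
  proof (rule always_eventually, intro allI)
    fix t
    show "norm (inner (w t) (u t) / norm (w t)) \<le> norm (u t)"
    proof (cases "w t = 0")
      case False
      have "\<bar>inner (w t) (u t)\<bar> \<le> norm (w t) * norm (u t)" by (rule Cauchy_Schwarz_ineq2)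
      then show ?thesis using False by (simp add: divide_le_eq mult.commute)
    qed simp
  qed
  moreover have "((\<lambda>t. norm (u t)) \<longlongrightarrow> 0) F" using assms(2) True by (simp add: tendsto_norm_zero_iff)
  ultimately show ?thesis using True by (simp add: Lim_null_comparison)
next
  case False
  have "((\<lambda>t. inner (w t) (u t) / norm (w t)) \<longlongrightarrow> inner L L / norm L) F"
    using assms False by (intro tendsto_intros) auto
  then show ?thesis using False by (simp add: power2_norm_eq_inner[symmetric] power2_eq_square)
qed

lemma main_gen:
  fixes S :: "real set" and v v' :: "real \<Rightarrow> 'a::real_inner"
  assumes dv: "\<And>t. t \<in> S \<Longrightarrow> (v has_vector_derivative v' t) (at t within S)"
    and cv': "continuous_on S v'"
    and fin: "finite {t \<in> S. v t = 0}"
  shows "\<exists>\<mu> :: real \<Rightarrow> real. C1_on S \<mu> \<and> (\<forall>t\<in>S. \<bar>\<mu> t\<bar> = norm (v t))"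
proof -
  define Z where "Z = {t \<in> S. v t = 0}"
  have finZ: "finite Z" using fin Z_def by simp
  define c where "c t = card {x\<in>Z. x < t}" for t
  define s where "s t = (-1::real) ^ c t" for t
  define \<mu> where "\<mu> t = s t * norm (v t)" for t
  define G where "G t = (if v t = 0 then - s t * norm (v' t) else s t * (inner (v t) (v' t) / norm (v t)))" for t
  have abss: "\<bar>s t\<bar> = 1" for t by (simp add: s_def)
  have cv: "continuous (at t within S) v" if "t \<in> S" for t
    using dv[OF that] by (rule has_vector_derivative_continuous)
  have cv't: "continuous (at t within S) v'" if "t \<in> S" for t
    using cv' that by (simp add: continuous_on_eq_continuous_within)
  have ok: "(\<mu> has_vector_derivative G t) (at t within S) \<and> continuous (at t within S) G" if tS: "t \<in> S" for t
  proof (cases "v t = 0")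
    case False
    then have tZ: "t \<notin> Z" by (simp add: Z_def)
    obtain d where d0: "d > 0" and d: "\<forall>x\<in>Z. x \<noteq> t \<longrightarrow> d \<le> dist t x"
      using finite_set_avoid[OF finZ] by blast
    have sc: "s y = s t" if "dist y t < d" for y
    proof -
      have "{x\<in>Z. x < y} = {x\<in>Z. x < t}"
      proof (intro Collect_cong conj_cong refl iffI)
        fix x assume "x \<in> Z" "x < y"
        show "x < t"
        proof (rule ccontr)
          assume "\<not> x < t"
          then have "x \<noteq> t" using tZ \<open>x \<in> Z\<close> by auto
          then have "d \<le> dist t x" using d \<open>x \<in> Z\<close> by auto
          then show False using \<open>\<not> x < t\<close> \<open>x < y\<close> that by (simp add: dist_real_def)
        qed
      next
        fix x assume "x \<in> Z" "x < t"
        show "x < y"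
        proof (rule ccontr)
          assume "\<not> x < y"
          then have "x \<noteq> t" using tZ \<open>x \<in> Z\<close> by auto
          then have "d \<le> dist t x" using d \<open>x \<in> Z\<close> by auto
          then show False using \<open>\<not> x < y\<close> \<open>x < t\<close> that by (simp add: dist_real_def)
        qed
      qed
      then show ?thesis by (simp add: s_def c_def)
    qed
    have D: "((\<lambda>y. s t * norm (v y)) has_vector_derivative G t) (at t within S)"
    proof -
      have h1: "(v has_derivative (\<lambda>h. h *\<^sub>R v' t)) (at t within S)"
        using dv[OF tS] by (simp add: has_vector_derivative_def)
      have h2: "(norm has_derivative (\<lambda>y. inner y (sgn (v t)))) (at (v t) within v ` S)"
        by (rule has_derivative_at_withinI[OF has_derivative_norm[OF False]])
      have "((norm \<circ> v) has_derivative ((\<lambda>y. inner y (sgn (v t))) \<circ> (\<lambda>h. h *\<^sub>R v' t))) (at t within S)"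
        by (rule diff_chain_within[OF h1 h2])
      then have "((\<lambda>y. s t * norm (v y)) has_derivative (\<lambda>h. s t * (((\<lambda>y. inner y (sgn (v t))) \<circ> (\<lambda>h. h *\<^sub>R v' t)) h))) (at t within S)"
        by (auto intro: has_derivative_mult_right simp: o_def)
      moreover have "(\<lambda>h. s t * (((\<lambda>y. inner y (sgn (v t))) \<circ> (\<lambda>h. h *\<^sub>R v' t)) h)) = (\<lambda>h. h *\<^sub>R G t)"
        using False by (auto simp: G_def sgn_div_norm o_def inner_commute field_simps)
      ultimately show ?thesis by (simp add: has_vector_derivative_def)
    qed
    have "(\<mu> has_vector_derivative G t) (at t within S)"
      by (rule has_vector_derivative_transform_within[OF D d0 tS]) (simp add: \<mu>_def sc)
    moreover have "continuous (at t within S) G"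
    proof -
      have lim: "((\<lambda>y. s t * (inner (v y) (v' y) / norm (v y))) \<longlongrightarrow> G t) (at t within S)"
        using cv[OF tS] cv't[OF tS] False unfolding continuous_within G_def
        by (auto intro!: tendsto_intros)
      have ev1: "eventually (\<lambda>y. v y \<noteq> 0) (at t within S)"
        using cv[OF tS] False unfolding continuous_within by (rule tendsto_imp_eventually_ne)
      have ev2: "eventually (\<lambda>y. dist y t < d) (at t within S)"
        using d0 by (auto simp: eventually_at)
      have "eventually (\<lambda>y. s t * (inner (v y) (v' y) / norm (v y)) = G y) (at t within S)"
        using ev1 ev2 by eventually_elim (simp add: G_def sc)
      then show ?thesis unfolding continuous_within using lim by (rule Lim_transform_eventually[rotated])
    qed
    ultimately show ?thesis by blast
  next
    case True
    then have tZ: "t \<in> Z" using tS by (simp add: Z_def)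
    define \<sigma> where "\<sigma> = s t"
    obtain d where d0: "d > 0" and d: "\<forall>x\<in>Z. x \<noteq> t \<longrightarrow> d \<le> dist t x"
      using finite_set_avoid[OF finZ] by blast
    have sgt: "s y = - \<sigma>" if "dist y t < d" "t < y" for y
    proof -
      have "{x\<in>Z. x < y} = insert t {x\<in>Z. x < t}"
      proof (intro set_eqI iffI)
        fix x assume x: "x \<in> {x\<in>Z. x < y}"
        show "x \<in> insert t {x\<in>Z. x < t}"
        proof (rule ccontr)
          assume "x \<notin> insert t {x\<in>Z. x < t}"
          then have "x \<noteq> t" "t < x" using x by auto
          then have "d \<le> dist t x" using d x by auto
          then show False using \<open>t < x\<close> x that by (simp add: dist_real_def)
        qed
      qed (use tZ that in auto)
      moreover have "finite {x\<in>Z. x < t}" using finZ by simp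
      ultimately have "c y = Suc (c t)" by (simp add: c_def)
      then show ?thesis by (simp add: s_def \<sigma>_def)
    qed
    have slt: "s y = \<sigma>" if "dist y t < d" "y < t" for y
    proof -
      have "{x\<in>Z. x < y} = {x\<in>Z. x < t}"
      proof (intro set_eqI iffI)
        fix x assume x: "x \<in> {x\<in>Z. x < t}"
        show "x \<in> {x\<in>Z. x < y}"
        proof (rule ccontr)
          assume "x \<notin> {x\<in>Z. x < y}"
          then have "x \<noteq> t" "y \<le> x" "x < t" using x by auto
          then have "d \<le> dist t x" using d x by auto
          then show False using \<open>y \<le> x\<close> \<open>x < t\<close> that by (simp add: dist_real_def)
        qed
      qed (use that in auto)
      then show ?thesis by (simp add: s_def \<sigma>_def c_def)
    qed
    define w where "w y = inverse (y - t) *\<^sub>R (v y - v t)" for y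
    have wlim: "(w \<longlongrightarrow> v' t) (at t within S)"
      unfolding w_def by (rule vdiff_quot[OF dv[OF tS]])
    have evd: "eventually (\<lambda>y. y \<in> S \<and> y \<noteq> t \<and> dist y t < d) (at t within S)"
      using d0 by (auto simp: eventually_at)
    have quot: "\<mu> y / (y - t) = - \<sigma> * norm (w y)" if "y \<noteq> t" "dist y t < d" for y
    proof (cases "y < t")
      case True
      then show ?thesis using slt[OF that(2) True] \<open>v t = 0\<close>
        by (simp add: \<mu>_def w_def divide_simps abs_if)
    next
      case False
      then have "t < y" using that by simp
      then show ?thesis using sgt[OF that(2) \<open>t < y\<close>] \<open>v t = 0\<close>
        by (simp add: \<mu>_def w_def divide_simps abs_if)
    qed
    have "((\<lambda>y. (\<mu> y - \<mu> t) / (y - t)) \<longlongrightarrow> G t) (at t within S)"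
    proof -
      have "((\<lambda>y. - \<sigma> * norm (w y)) \<longlongrightarrow> G t) (at t within S)"
        using wlim True by (auto simp: G_def \<sigma>_def intro!: tendsto_intros)
      moreover have "eventually (\<lambda>y. - \<sigma> * norm (w y) = (\<mu> y - \<mu> t) / (y - t)) (at t within S)"
        using evd by eventually_elim (use quot \<mu>_def True in auto)
      ultimately show ?thesis by (rule Lim_transform_eventually)
    qed
    then have "(\<mu> has_vector_derivative G t) (at t within S)"
      by (simp add: has_field_derivative_iff has_real_derivative_iff_has_vector_derivative[symmetric])
    moreover have "continuous (at t within S) G"
    proof -
      have "((\<lambda>y. - \<sigma> * (inner (w y) (v' y) / norm (w y))) \<longlongrightarrow> G t) (at t within S)"
        using tendsto_mult_left[OF qlim[OF wlim cv't[OF tS, unfolded continuous_within]], of "- \<sigma>"] True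
        by (simp add: G_def \<sigma>_def)
      moreover have "eventually (\<lambda>y. - \<sigma> * (inner (w y) (v' y) / norm (w y)) = G y) (at t within S)"
        using evd
      proof eventually_elim
        case (elim y)
        then have yS: "y \<in> S" and yt: "y \<noteq> t" and dy: "dist y t < d" by auto
        have vy: "v y = (y - t) *\<^sub>R w y" using yt True by (simp add: w_def)
        have "v y \<noteq> 0"
        proof
          assume "v y = 0"
          then have "y \<in> Z" using yS by (simp add: Z_def)
          then show False using d yt dy by (metis dist_commute not_le)
        qed
        have yne: "y - t \<noteq> 0" using yt by simp
        have sy: "s y * (y - t) / \<bar>y - t\<bar> = - \<sigma>"
        proof (cases "y < t")
          case True then show ?thesis using slt[OF dy True] by (simp add: field_simps)
        next
          case False then have "t < y" using yt by simp
          then show ?thesis using sgt[OF dy \<open>t < y\<close>] by (simp add: field_simps)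
        qed
        have "G y = s y * (inner (v y) (v' y) / norm (v y))" using \<open>v y \<noteq> 0\<close> by (simp add: G_def)
        also have "\<dots> = (s y * (y - t) / \<bar>y - t\<bar>) * (inner (w y) (v' y) / norm (w y))"
        proof -
          have i: "inner (v y) (v' y) = (y - t) * inner (w y) (v' y)" by (simp add: vy)
          have n: "norm (v y) = \<bar>y - t\<bar> * norm (w y)" by (simp add: vy)
          show ?thesis using yne by (simp add: i n)
        qed
        finally show ?case using sy by simp
      qed
      ultimately show ?thesis unfolding continuous_within by (rule Lim_transform_eventually)
    qed
    ultimately show ?thesis by blast
  qed
  have "C1_on S \<mu>"
    unfolding C1_on_def using ok by (auto simp: continuous_on_eq_continuous_within)
  moreover have "\<forall>t\<in>S. \<bar>\<mu> t\<bar> = norm (v t)" by (simp add: \<mu>_def abs_mult abss)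
  ultimately show ?thesis by blast
qed

theorem mainTheorem3:
  fixes a b :: real and v :: "real \<Rightarrow> real ^ 'n"
  assumes "a < b"
    and "C1_on {a..b} v"
    and "finite {t \<in> {a..b}. v t = 0}"
  shows "\<exists>\<mu> :: real \<Rightarrow> real. C1_on {a..b} \<mu> \<and> (\<forall>t\<in>{a..b}. \<bar>\<mu> t\<bar> = norm (v t))"
proof -
  obtain v' where "\<forall>t\<in>{a..b}. (v has_vector_derivative v' t) (at t within {a..b})" "continuous_on {a..b} v'"
    using assms(2) unfolding C1_on_def by blast
  then show ?thesis using main_gen[of "{a..b}" v v'] assms(3) by blast
qed

end
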